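(* Let $F$ be a free group of rank greater than one. Let $H$ be a finitely generated subgroup of infinite index in $F$ and let $\{\gamma_1,\ldots,\gamma_n\}$ be a finite subset of $F\smallsetminus H$. Then there exist an integer $k$ and a surjective homomorphism $f\colon F\to S_k$ onto the symmetric group $S_k$ such that $f(\gamma_i)\notin f(H)$ for all $i=1,\ldots,n$. *)

theory Defs
  imports "HOL-Algebra.Algebra"
begin

text \<open>Words over a set of letters: a letter is a pair (x, b), meaning x if b = True and
  the inverse of x if b = False.\<close>

definition word_eval :: "('a, 'b) monoid_scheme \<Rightarrow> ('a \<times> bool) list \<Rightarrow> 'a" where
  "word_eval G ws = foldr (\<lambda>(x, b) acc. (if b then x else inv\<^bsub>G\<^esub> x) \<otimes>\<^bsub>G\<^esub> acc) ws \<one>\<^bsub>G\<^esub>"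

definition reduced_word :: "('a \<times> bool) list \<Rightarrow> bool" where
  "reduced_word ws \<longleftrightarrow>
     (\<forall>i. Suc i < length ws \<longrightarrow>
        \<not> (fst (ws ! i) = fst (ws ! Suc i) \<and> snd (ws ! i) \<noteq> snd (ws ! Suc i)))"

definition free_basis :: "('a, 'b) monoid_scheme \<Rightarrow> 'a set \<Rightarrow> bool" where
  "free_basis G B \<longleftrightarrow>
     B \<subseteq> carrier G \<and> generate G B = carrier G \<and>
     (\<forall>ws. ws \<noteq> [] \<and> set (map fst ws) \<subseteq> B \<and> reduced_word ws \<longrightarrow> word_eval G ws \<noteq> one G)"

definition free_group_rank_gt_one :: "('a, 'b) monoid_scheme \<Rightarrow> bool" where
  "free_group_rank_gt_one G \<longleftrightarrow> group G \<and>
     (\<exists>B. free_basis G B \<and> (\<exists>a b. a \<in> B \<and> b \<in> B \<and> a \<noteq> b))"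

definition fin_gen_subgroup :: "'a set \<Rightarrow> ('a, 'b) monoid_scheme \<Rightarrow> bool" where
  "fin_gen_subgroup H G \<longleftrightarrow> subgroup H G \<and>
     (\<exists>S. finite S \<and> S \<subseteq> carrier G \<and> H = generate G S)"

end

theory Submission
  imports Defs
begin

definition winv :: "('c \<times> bool) list \<Rightarrow> ('c \<times> bool) list" where
  "winv ws = rev (map (\<lambda>(x, b). (x, \<not> b)) ws)"

lemma word_eval_Nil[simp]: "word_eval G [] = \<one>\<^bsub>G\<^esub>"
  by (simp add: word_eval_def)

lemma word_eval_Cons[simp]:
  "word_eval G ((x, b) # ws) = (if b then x else inv\<^bsub>G\<^esub> x) \<otimes>\<^bsub>G\<^esub> word_eval G ws"
  by (simp add: word_eval_def)

context group begin

lemma word_eval_closed: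
  "set (map fst ws) \<subseteq> carrier G \<Longrightarrow> word_eval G ws \<in> carrier G"
  by (induction ws) auto

lemma word_eval_append:
  "set (map fst ws) \<subseteq> carrier G \<Longrightarrow> set (map fst vs) \<subseteq> carrier G \<Longrightarrow>
   word_eval G (ws @ vs) = word_eval G ws \<otimes> word_eval G vs"
  by (induction ws) (auto simp: m_assoc word_eval_closed)

lemma word_eval_winv:
  "set (map fst ws) \<subseteq> carrier G \<Longrightarrow> word_eval G (winv ws) = inv (word_eval G ws)"
proof (induction ws)
  case Nil then show ?case by (simp add: winv_def)
next
  case (Cons l ws)
  obtain x b where l: "l = (x, b)" by force
  have x: "x \<in> carrier G" using Cons.prems l by auto
  have ws: "set (map fst ws) \<subseteq> carrier G" using Cons.prems by auto
  have "winv (l # ws) = winv ws @ [(x, \<not> b)]" by (simp add: winv_def l)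
  moreover have "set (map fst (winv ws)) \<subseteq> carrier G" using ws by (auto simp: winv_def)
  ultimately have "word_eval G (winv (l # ws)) = inv (word_eval G ws) \<otimes> (if \<not> b then x else inv x)"
    using Cons x ws by (simp add: word_eval_append)
  also have "\<dots> = inv ((if b then x else inv x) \<otimes> word_eval G ws)"
    using x ws by (simp add: inv_mult_group word_eval_closed)
  finally show ?case by (simp add: l)
qed

lemma word_eval_cancel:
  assumes "set (map fst ws) \<subseteq> carrier G" "Suc i < length ws"
    "fst (ws ! i) = fst (ws ! Suc i)" "snd (ws ! i) \<noteq> snd (ws ! Suc i)"
  shows "word_eval G ws = word_eval G (take i ws @ drop (Suc (Suc i)) ws)"
proof -
  have dec: "ws = take i ws @ [ws ! i, ws ! Suc i] @ drop (Suc (Suc i)) ws"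
    using assms(2) by (metis Cons_nth_drop_Suc Suc_lessD append_Cons append_self_conv2 append_take_drop_id)
  obtain x b where l1: "ws ! i = (x, b)" by force
  obtain y c where l2: "ws ! Suc i = (y, c)" by force
  have xy: "y = x" "c = (\<not> b)" using assms(3,4) l1 l2 by auto
  have x: "x \<in> carrier G" using assms(1,2) l1
    by (metis Suc_lessD fst_conv image_eqI list.set_map nth_mem subsetD)
  have sets: "set (map fst (take i ws)) \<subseteq> carrier G" "set (map fst (drop (Suc (Suc i)) ws)) \<subseteq> carrier G"
    using assms(1) by (auto dest: in_set_takeD in_set_dropD)
  let ?R = "[ws ! i, ws ! Suc i] @ drop (Suc (Suc i)) ws"
  have sR: "set (map fst ?R) \<subseteq> carrier G" using sets x l1 l2 xy by auto
  have "word_eval G [ws ! i, ws ! Suc i] = \<one>"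
    using x by (simp add: l1 l2 xy)
  then have e2: "word_eval G ?R = word_eval G (drop (Suc (Suc i)) ws)"
    using sets x l1 l2 xy by (subst word_eval_append) (auto simp: word_eval_closed)
  have "word_eval G ws = word_eval G (take i ws @ ?R)" using dec by metis
  also have "\<dots> = word_eval G (take i ws) \<otimes> word_eval G ?R"
    using sets(1) sR by (rule word_eval_append)
  also have "\<dots> = word_eval G (take i ws) \<otimes> word_eval G (drop (Suc (Suc i)) ws)"
    by (simp only: e2)
  also have "\<dots> = word_eval G (take i ws @ drop (Suc (Suc i)) ws)"
    using sets by (simp only: word_eval_append)
  finally show ?thesis .
qed

end

abbreviation mapw :: "('c \<Rightarrow> 'd) \<Rightarrow> ('c \<times> bool) list \<Rightarrow> ('d \<times> bool) list" where
  "mapw \<phi> ws \<equiv> map (\<lambda>(x, b). (\<phi> x, b)) ws"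

lemma mapw_carrier:
  "set (map fst w) \<subseteq> B \<Longrightarrow> \<phi> ` B \<subseteq> C \<Longrightarrow> set (map fst (mapw \<phi> w)) \<subseteq> C"
  by (induction w) (auto simp: image_subset_iff)

lemma free_kill:
  assumes F: "group F" and fb: "free_basis F B" and G': "group G'" and phi: "\<phi> ` B \<subseteq> carrier G'"
  shows "set (map fst ws) \<subseteq> B \<Longrightarrow> word_eval F ws = \<one>\<^bsub>F\<^esub> \<Longrightarrow> word_eval G' (mapw \<phi> ws) = \<one>\<^bsub>G'\<^esub>"
proof (induction "length ws" arbitrary: ws rule: less_induct)
  case less
  have BF: "B \<subseteq> carrier F" using fb by (simp add: free_basis_def)
  show ?case
  proof (cases "ws = []")
    case True then show ?thesis by simp
  next
    case False
    then have "\<not> reduced_word ws" using fb less.prems by (auto simp: free_basis_def)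
    then obtain i where i: "Suc i < length ws" "fst (ws ! i) = fst (ws ! Suc i)" "snd (ws ! i) \<noteq> snd (ws ! Suc i)"
      by (auto simp: reduced_word_def)
    define ws' where "ws' = take i ws @ drop (Suc (Suc i)) ws"
    have len: "length ws' < length ws" using i(1) by (simp add: ws'_def)
    have s': "set (map fst ws') \<subseteq> B" using less.prems(1)
      by (auto simp: ws'_def dest: in_set_takeD in_set_dropD)
    have "word_eval F ws = word_eval F ws'"
      unfolding ws'_def using group.word_eval_cancel[OF F _ i] less.prems(1) BF by auto
    then have "word_eval G' (mapw \<phi> ws') = \<one>\<^bsub>G'\<^esub>" using less.hyps[OF len s'] less.prems by simp
    moreover have "mapw \<phi> ws' = take i (mapw \<phi> ws) @ drop (Suc (Suc i)) (mapw \<phi> ws)"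
      by (simp add: ws'_def take_map drop_map)
    moreover have "word_eval G' (mapw \<phi> ws) = word_eval G' (take i (mapw \<phi> ws) @ drop (Suc (Suc i)) (mapw \<phi> ws))"
      apply (rule group.word_eval_cancel[OF G'])
      using less.prems(1) phi i by (auto simp: case_prod_beta)
    ultimately show ?thesis by simp
  qed
qed

lemma words_exist:
  assumes F: "group F" and fb: "free_basis F B" and g: "g \<in> carrier F"
  shows "\<exists>ws. set (map fst ws) \<subseteq> B \<and> word_eval F ws = g"
proof -
  have BF: "B \<subseteq> carrier F" using fb by (simp add: free_basis_def)
  have "g \<in> generate F B" using fb g by (simp add: free_basis_def)
  then show ?thesis
  proof (induction g rule: generate.induct)
    case one then show ?case by (rule exI[of _ "[]"]) simp
  next
    case (incl h) then show ?case using BF F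
      by (intro exI[of _ "[(h, True)]"]) (auto simp: group.is_monoid monoid.r_one)
  next
    case (inv h) then show ?case using BF F
      by (intro exI[of _ "[(h, False)]"]) (auto simp: group.is_monoid monoid.r_one group.inv_closed)
  next
    case (eng h1 h2)
    then obtain w1 w2 where "set (map fst w1) \<subseteq> B" "word_eval F w1 = h1"
      "set (map fst w2) \<subseteq> B" "word_eval F w2 = h2" by blast
    then show ?case using BF F
      by (intro exI[of _ "w1 @ w2"]) (auto simp: group.word_eval_append)
  qed
qed

definition fext :: "('a, 'b) monoid_scheme \<Rightarrow> 'a set \<Rightarrow> ('c, 'd) monoid_scheme \<Rightarrow> ('a \<Rightarrow> 'c) \<Rightarrow> 'a \<Rightarrow> 'c" where
  "fext F B G' \<phi> g = word_eval G' (mapw \<phi> (SOME ws. set (map fst ws) \<subseteq> B \<and> word_eval F ws = g))"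

lemma free_welldef:
  assumes F: "group F" and fb: "free_basis F B" and G': "group G'" and phi: "\<phi> ` B \<subseteq> carrier G'"
    and w1: "set (map fst w1) \<subseteq> B" and w2: "set (map fst w2) \<subseteq> B"
    and eq: "word_eval F w1 = word_eval F w2"
  shows "word_eval G' (mapw \<phi> w1) = word_eval G' (mapw \<phi> w2)"
proof -
  have BF: "B \<subseteq> carrier F" using fb by (simp add: free_basis_def)
  have c1: "set (map fst w1) \<subseteq> carrier F" "set (map fst w2) \<subseteq> carrier F" using w1 w2 BF by auto
  have cw: "set (map fst (winv w1)) \<subseteq> B" using w1 by (auto simp: winv_def)
  have "word_eval F (winv w1 @ w2) = \<one>\<^bsub>F\<^esub>"
    using c1 cw BF eq by (simp add: group.word_eval_append[OF F] group.word_eval_winv[OF F]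
        group.word_eval_closed[OF F] group.l_inv[OF F] subset_trans)
  then have "word_eval G' (mapw \<phi> (winv w1 @ w2)) = \<one>\<^bsub>G'\<^esub>"
    by (intro free_kill[OF F fb G' phi]) (use cw w2 in auto)
  moreover have "mapw \<phi> (winv w1) = winv (mapw \<phi> w1)"
    by (simp add: winv_def rev_map case_prod_beta)
  moreover have d1: "set (map fst (mapw \<phi> w1)) \<subseteq> carrier G'" "set (map fst (mapw \<phi> w2)) \<subseteq> carrier G'"
    by (rule mapw_carrier[OF w1 phi], rule mapw_carrier[OF w2 phi])
  moreover have "set (map fst (winv (mapw \<phi> w1))) \<subseteq> carrier G'"
    using d1 by (auto simp: winv_def)
  ultimately have "inv\<^bsub>G'\<^esub> word_eval G' (mapw \<phi> w1) \<otimes>\<^bsub>G'\<^esub> word_eval G' (mapw \<phi> w2) = \<one>\<^bsub>G'\<^esub>"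
    by (simp add: group.word_eval_append[OF G'] group.word_eval_winv[OF G'])
  then show ?thesis using d1
    by (metis G' group.inv_equality group.inv_inv group.inv_closed group.word_eval_closed)
qed

lemma fext_word:
  assumes F: "group F" and fb: "free_basis F B" and G': "group G'" and phi: "\<phi> ` B \<subseteq> carrier G'"
    and w: "set (map fst w) \<subseteq> B"
  shows "fext F B G' \<phi> (word_eval F w) = word_eval G' (mapw \<phi> w)"
proof -
  let ?P = "\<lambda>ws. set (map fst ws) \<subseteq> B \<and> word_eval F ws = word_eval F w"
  have "?P (SOME ws. ?P ws)" by (rule someI[of ?P w]) (use w in auto)
  then show ?thesis unfolding fext_def
    using free_welldef[OF F fb G' phi _ w] by blast
qed

lemma fext_hom:
  assumes F: "group F" and fb: "free_basis F B" and G': "group G'" and phi: "\<phi> ` B \<subseteq> carrier G'"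
  shows "fext F B G' \<phi> \<in> hom F G'"
proof (rule homI)
  have BF: "B \<subseteq> carrier F" using fb by (simp add: free_basis_def)
  fix x assume "x \<in> carrier F"
  then obtain w where w: "set (map fst w) \<subseteq> B" "word_eval F w = x" using words_exist[OF F fb] by blast
  then show "fext F B G' \<phi> x \<in> carrier G'"
    using fext_word[OF F fb G' phi w(1)] mapw_carrier[OF w(1) phi]
    by (auto intro!: group.word_eval_closed[OF G'])
next
  have BF: "B \<subseteq> carrier F" using fb by (simp add: free_basis_def)
  fix x y assume "x \<in> carrier F" "y \<in> carrier F"
  then obtain w v where w: "set (map fst w) \<subseteq> B" "word_eval F w = x"
    and v: "set (map fst v) \<subseteq> B" "word_eval F v = y" using words_exist[OF F fb] by metis
  have wv: "set (map fst (w @ v)) \<subseteq> B" using w v by auto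
  have "x \<otimes>\<^bsub>F\<^esub> y = word_eval F (w @ v)" using w v BF
    by (simp add: group.word_eval_append[OF F] subset_trans)
  moreover have "set (map fst (mapw \<phi> w)) \<subseteq> carrier G'" "set (map fst (mapw \<phi> v)) \<subseteq> carrier G'"
    by (rule mapw_carrier[OF w(1) phi], rule mapw_carrier[OF v(1) phi])
  ultimately show "fext F B G' \<phi> (x \<otimes>\<^bsub>F\<^esub> y) = fext F B G' \<phi> x \<otimes>\<^bsub>G'\<^esub> fext F B G' \<phi> y"
    using fext_word[OF F fb G' phi wv] fext_word[OF F fb G' phi w(1)] fext_word[OF F fb G' phi v(1)] w v
    by (simp add: group.word_eval_append[OF G'])
qed

lemma fext_gen:
  assumes F: "group F" and fb: "free_basis F B" and G': "group G'" and phi: "\<phi> ` B \<subseteq> carrier G'"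
    and x: "x \<in> B"
  shows "fext F B G' \<phi> x = \<phi> x"
proof -
  have BF: "B \<subseteq> carrier F" using fb by (simp add: free_basis_def)
  have "word_eval F [(x, True)] = x" using x BF by (simp add: group.is_monoid[OF F] monoid.r_one subsetD)
  then show ?thesis using fext_word[OF F fb G' phi, of "[(x,True)]"] x phi
    by (auto simp: group.is_monoid[OF G'] monoid.r_one)
qed

definition Rt :: "(nat \<Rightarrow> nat) set \<Rightarrow> nat \<Rightarrow> nat \<Rightarrow> nat \<Rightarrow> bool" where
  "Rt G x y z \<longleftrightarrow> x \<noteq> y \<and> y \<noteq> z \<and> x \<noteq> z \<and> cycle_of_list [x, y, z] \<in> G"

lemma c3_apply:
  assumes "x \<noteq> y" "y \<noteq> z" "x \<noteq> z"
  shows "cycle_of_list [x, y, z] w = (if w = x then y else if w = y then z else if w = z then x else w)"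
  using assms by (auto simp: transpose_def)

lemma c3_rot:
  assumes "x \<noteq> y" "y \<noteq> z" "x \<noteq> z"
  shows "cycle_of_list [x, y, z] = cycle_of_list [y, z, x]"
proof (rule ext)
  fix w
  have a: "y \<noteq> z" "z \<noteq> x" "y \<noteq> x" using assms by auto
  show "cycle_of_list [x, y, z] w = cycle_of_list [y, z, x] w"
    unfolding c3_apply[OF assms] c3_apply[OF a] using assms by auto
qed

lemma c3_sq:
  assumes "x \<noteq> y" "y \<noteq> z" "x \<noteq> z"
  shows "cycle_of_list [x, y, z] \<circ> cycle_of_list [x, y, z] = cycle_of_list [z, y, x]"
proof (rule ext)
  fix w
  have a: "z \<noteq> y" "y \<noteq> x" "z \<noteq> x" using assms by auto
  show "(cycle_of_list [x, y, z] \<circ> cycle_of_list [x, y, z]) w = cycle_of_list [z, y, x] w"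
    unfolding comp_apply c3_apply[OF assms] c3_apply[OF a] using assms by auto
qed

context
  fixes G n assumes sg: "subgroup G (sym_group n)"
begin

lemma G_perm: "g \<in> G \<Longrightarrow> g permutes {1..n}"
  using subgroup.subset[OF sg] by (auto simp: sym_group_carrier)

lemma G_comp: "g \<in> G \<Longrightarrow> h \<in> G \<Longrightarrow> g \<circ> h \<in> G"
  using subgroup.m_closed[OF sg] by (simp add: sym_group_mult)

lemma G_inv: "g \<in> G \<Longrightarrow> inv' g \<in> G"
  using subgroup.m_inv_closed[OF sg] subgroup.subset[OF sg] sym_group_inv_equality by force

lemma G_id: "id \<in> G"
  using subgroup.one_closed[OF sg] by (simp add: sym_group_one)

lemma G_pow: "g \<in> G \<Longrightarrow> g ^^ k \<in> G"
  by (induction k) (auto simp: G_id G_comp)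

lemma Rt_rot: "Rt G x y z \<Longrightarrow> Rt G y z x"
  unfolding Rt_def using c3_rot[of x y z] by simp

lemma Rt_rev: "Rt G x y z \<Longrightarrow> Rt G z y x"
  unfolding Rt_def using c3_sq[of x y z] G_comp[of "cycle_of_list [x, y, z]" "cycle_of_list [x, y, z]"] by auto

lemma Rt_sym: "Rt G x y z \<Longrightarrow> Rt G y x z"
  using Rt_rot[OF Rt_rev[of x y z]] by simp

lemma Rt_conj:
  assumes "Rt G x y z" "g \<in> G"
  shows "Rt G (g x) (g y) (g z)"
proof -
  have b: "bij g" using G_perm[OF assms(2)] permutes_bij by blast
  have d: "distinct [x, y, z]" and c: "cycle_of_list [x, y, z] \<in> G" using assms(1) by (auto simp: Rt_def)
  have eq: "g \<circ> cycle_of_list [x, y, z] \<circ> inv' g = cycle_of_list (map g [x, y, z])"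
    by (rule conjugation_of_cycle[OF d b])
  have "g \<circ> cycle_of_list [x, y, z] \<in> G" by (rule G_comp[OF assms(2) c])
  then have "g \<circ> cycle_of_list [x, y, z] \<circ> inv' g \<in> G" by (rule G_comp[OF _ G_inv[OF assms(2)]])
  then have m: "cycle_of_list [g x, g y, g z] \<in> G" using eq by simp
  have "inj g" using b bij_is_inj by blast
  then have "g x \<noteq> g y" "g y \<noteq> g z" "g x \<noteq> g z" using d by (auto simp: inj_eq)
  then show ?thesis using m unfolding Rt_def by simp
qed

lemma Rt_four:
  assumes "Rt G a b c" "Rt G a b d" "c \<noteq> d"
  shows "Rt G b c d"
proof -
  have c: "cycle_of_list [a, b, c] \<in> G" and d: "a \<noteq> b" "b \<noteq> c" "a \<noteq> c" "a \<noteq> d" "b \<noteq> d"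
    using assms by (auto simp: Rt_def)
  have "Rt G (cycle_of_list [a, b, c] a) (cycle_of_list [a, b, c] b) (cycle_of_list [a, b, c] d)"
    by (rule Rt_conj[OF assms(2) c])
  moreover have "cycle_of_list [a, b, c] a = b" "cycle_of_list [a, b, c] b = c" "cycle_of_list [a, b, c] d = d"
    unfolding c3_apply[OF d(1-3)] using d assms(3) by auto
  ultimately show ?thesis by simp
qed

lemma Rt_all_from_cd:
  assumes cd: "c \<noteq> d" "c \<in> S" "d \<in> S" and h: "\<And>x. x \<in> S \<Longrightarrow> x \<noteq> c \<Longrightarrow> x \<noteq> d \<Longrightarrow> Rt G c d x"
    and xyz: "x \<in> S" "y \<in> S" "z \<in> S" "x \<noteq> y" "y \<noteq> z" "x \<noteq> z"
  shows "Rt G x y z"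
proof -
  have cxy: "Rt G c x y" if "x \<in> S" "y \<in> S" "x \<noteq> y" "x \<noteq> c" "y \<noteq> c" for x y
  proof (cases "x = d")
    case True then show ?thesis using h[of y] that by simp
  next
    case False
    show ?thesis
    proof (cases "y = d")
      case True then show ?thesis using Rt_rot[OF Rt_rot[OF Rt_rev[OF h[of x]]]] that False by simp
    next
      case False': False
      have "Rt G d c x" "Rt G d c y" using h[of x] h[of y] that False False' Rt_sym by auto
      then show ?thesis using Rt_four[of d c x y] that by simp
    qed
  qed
  show ?thesis
  proof (cases "x = c")
    case True then show ?thesis using cxy xyz by auto
  next
    case xc: False
    show ?thesis
    proof (cases "y = c")
      case True then show ?thesis using Rt_rot[OF Rt_rot[OF cxy[of z x]]] xyz xc by auto
    next
      case yc: False
      show ?thesis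
      proof (cases "z = c")
        case True then show ?thesis using Rt_rot[OF cxy[of x y]] xyz xc yc by auto
      next
        case False
        have "Rt G c x y" "Rt G c x z" using cxy xyz False xc yc by auto
        then show ?thesis using Rt_four[of c x y z] xyz by simp
      qed
    qed
  qed
qed

lemma alt_sub:
  assumes all: "\<And>x y z. x \<in> {1..n} \<Longrightarrow> y \<in> {1..n} \<Longrightarrow> z \<in> {1..n} \<Longrightarrow> x \<noteq> y \<Longrightarrow> y \<noteq> z \<Longrightarrow> x \<noteq> z \<Longrightarrow> Rt G x y z"
  shows "carrier (alt_group n) \<subseteq> G"
proof -
  have tc: "h \<in> G" if hin: "h \<in> three_cycles n" for h
  proof -
    obtain cs where cs: "h = cycle_of_list cs" "distinct cs" "length cs = 3" "set cs \<subseteq> {1..n}"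
      using hin by blast
    obtain a b c where abc: "cs = [a, b, c]" using stupid_lemma[OF cs(3)] by blast
    have "Rt G a b c" using all[of a b c] cs(2,4) abc by auto
    then show ?thesis using cs(1) abc by (simp add: Rt_def)
  qed
  have "h \<in> G" if "h \<in> generate (alt_group n) (three_cycles n)" for h
    using that
  proof (induction h rule: generate.induct)
    case one then show ?case using G_id by (simp add: alt_group_one id_def)
  next
    case (incl h) then show ?case by (rule tc)
  next
    case (inv h)
    have "h \<in> carrier (alt_group n)" using inv three_cycles_incl by blast
    then have "inv\<^bsub>alt_group n\<^esub> h = inv' h" by (rule alt_group_inv_equality)
    then show ?case using G_inv[OF tc[OF inv]] by simp
  next
    case (eng h1 h2) then show ?case using G_comp[of h1 h2] by (simp only: alt_group_mult)
  qed
  then show ?thesis using alt_group_carrier_as_three_cycles by blast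
qed

lemma G_full:
  assumes all: "\<And>x y z. x \<in> {1..n} \<Longrightarrow> y \<in> {1..n} \<Longrightarrow> z \<in> {1..n} \<Longrightarrow> x \<noteq> y \<Longrightarrow> y \<noteq> z \<Longrightarrow> x \<noteq> z \<Longrightarrow> Rt G x y z"
    and g: "g \<in> G" "\<not> evenperm g"
  shows "G = carrier (sym_group n)"
proof
  show "G \<subseteq> carrier (sym_group n)" using subgroup.subset[OF sg] .
  show "carrier (sym_group n) \<subseteq> G"
  proof
    fix p assume p: "p \<in> carrier (sym_group n)"
    then have pp: "p permutes {1..n}" by (simp add: sym_group_carrier)
    have gp: "g permutes {1..n}" using G_perm[OF g(1)] .
    have perm: "permutation p" "permutation g" "permutation (inv' g)"
      using pp gp by (auto simp: permutation_permutes intro: permutes_inv)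
    have A: "carrier (alt_group n) \<subseteq> G" by (rule alt_sub[OF all]) auto
    show "p \<in> G"
    proof (cases "evenperm p")
      case True then show ?thesis using A pp by (auto simp: alt_group_carrier)
    next
      case False
      have "evenperm (inv' g \<circ> p)" using evenperm_comp[OF perm(3,1)] evenperm_inv[OF perm(2)] g(2) False by simp
      moreover have "inv' g \<circ> p permutes {1..n}" using pp gp by (simp add: permutes_compose permutes_inv)
      ultimately have "inv' g \<circ> p \<in> G" using A by (auto simp: alt_group_carrier)
      then have "g \<circ> (inv' g \<circ> p) \<in> G" using G_comp[OF g(1)] by blast
      moreover have "g \<circ> (inv' g \<circ> p) = p" using permutes_inv_o(1)[OF gp] by (simp add: o_assoc)
      ultimately show ?thesis by simp
    qed
  qed
qed

lemma Rt_perms: "Rt G x y z \<Longrightarrow> Rt G y x z \<and> Rt G x z y \<and> Rt G z y x \<and> Rt G y z x \<and> Rt G z x y"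
  using Rt_rot Rt_sym Rt_rev by blast

lemma Rt_big:
  assumes N: "N \<subseteq> {1..n}" and allN: "\<And>x y z. x \<in> N \<Longrightarrow> y \<in> N \<Longrightarrow> z \<in> N \<Longrightarrow> x \<noteq> y \<Longrightarrow> y \<noteq> z \<Longrightarrow> x \<noteq> z \<Longrightarrow> Rt G x y z"
    and card: "n + 2 \<le> 2 * card N" and tr: "\<And>x. x \<in> {1..n} \<Longrightarrow> \<exists>g\<in>G. g x \<in> N"
    and xyz: "x \<in> {1..n}" "y \<in> {1..n}" "z \<in> {1..n}" "x \<noteq> y" "y \<noteq> z" "x \<noteq> z"
  shows "Rt G x y z"
proof -
  have finN: "finite N" using N finite_subset by blast
  have "card N \<le> n" using card_mono[OF _ N] by simp
  then have "card N \<ge> 2" using card by linarith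
  then obtain c d where cd: "c \<in> N" "d \<in> N" "c \<noteq> d"
    by (metis One_nat_def card_le_Suc0_iff_eq finN not_less_eq_eq numeral_2_eq_2)
  have key: "Rt G c d w" if w: "w \<in> {1..n}" "w \<noteq> c" "w \<noteq> d" for w
  proof -
    obtain g where g: "g \<in> G" "g w \<in> N" using tr[OF w(1)] by blast
    define h where "h = inv' g"
    have h: "h \<in> G" using G_inv[OF g(1)] h_def by simp
    have gp: "g permutes {1..n}" using G_perm[OF g(1)] .
    have hp: "h permutes {1..n}" using G_perm[OF h] .
    have hg: "h (g w) = w" unfolding h_def using permutes_inverses(2)[OF gp] .
    define N' where "N' = h ` N"
    have wN': "w \<in> N'" unfolding N'_def using g(2) hg by force
    have injh: "inj h" using hp permutes_inj by blast
    have cN': "card N' = card N" unfolding N'_def using injh by (simp add: card_image inj_on_subset)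
    have N'sub: "N' \<subseteq> {1..n}" unfolding N'_def using N permutes_image[OF hp] by blast
    have allN': "Rt G a b e" if abe: "a \<in> N'" "b \<in> N'" "e \<in> N'" "a \<noteq> b" "b \<noteq> e" "a \<noteq> e" for a b e
    proof -
      obtain a0 b0 e0 where "a0 \<in> N" "b0 \<in> N" "e0 \<in> N" "a = h a0" "b = h b0" "e = h e0"
        using abe(1-3) unfolding N'_def by blast
      then show ?thesis using Rt_conj[OF allN[of a0 b0 e0] h] abe by auto
    qed
    have "card (N \<union> N') \<le> n" using card_mono[of "{1..n}" "N \<union> N'"] N N'sub by auto
    moreover have "card (N \<union> N') + card (N \<inter> N') = card N + card N'"
      using card_Un_Int[of N N'] finN N'_def by auto
    ultimately have "card (N \<inter> N') \<ge> 2" using cN' card by linarith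
    then obtain e f where ef: "e \<in> N \<inter> N'" "f \<in> N \<inter> N'" "e \<noteq> f"
      by (metis One_nat_def card_le_Suc0_iff_eq finN finite_Int not_less_eq_eq numeral_2_eq_2)
    have allU: "Rt G a b e'" if "a \<in> N \<union> N'" "b \<in> N \<union> N'" "e' \<in> N \<union> N'" "a \<noteq> b" "b \<noteq> e'" "a \<noteq> e'" for a b e'
    proof (rule Rt_all_from_cd[of e f "N \<union> N'"])
      fix y assume y: "y \<in> N \<union> N'" "y \<noteq> e" "y \<noteq> f"
      show "Rt G e f y" using y ef allN allN' by auto
    qed (use ef that in auto)
    show ?thesis using allU[of c d w] cd wN' that by auto
  qed
  show ?thesis
    by (rule Rt_all_from_cd[of c d "{1..n}"]) (use cd N key xyz in auto)
qed

lemma Rt_design: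
  fixes P :: "nat \<Rightarrow> nat"
  assumes p: "3 \<le> p" and injP: "inj_on P {..<p}" and n0: "n0 \<notin> P ` {..<p}"
    and u: "u \<in> G" "\<And>j. j < p \<Longrightarrow> u (P j) = P (Suc j mod p)" "u n0 = n0"
    and v: "v \<in> G" "v n0 = P 0" "\<And>j. Suc (Suc j) < p \<Longrightarrow> v (P j) = P (Suc j)" "v (P (p - 2)) = n0"
       "v (P (p - 1)) = P (p - 1)"
    and uv_out: "\<And>x. x \<notin> insert n0 (P ` {..<p}) \<Longrightarrow> u x = x \<and> v x = x"
    and xyz: "x \<in> insert n0 (P ` {..<p})" "y \<in> insert n0 (P ` {..<p})" "z \<in> insert n0 (P ` {..<p})"
       "x \<noteq> y" "y \<noteq> z" "x \<noteq> z"
  shows "Rt G x y z"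
proof -
  let ?N = "insert n0 (P ` {..<p})"
  have Pne: "P i \<noteq> P j" if "i < p" "j < p" "i \<noteq> j" for i j
    using injP that by (auto dest: inj_onD)
  have Pn0: "P i \<noteq> n0" if "i < p" for i using n0 that by auto
  define c where "c = cycle_of_list [P 0, n0, P (p - 1)]"
  have dc: "P 0 \<noteq> n0" "n0 \<noteq> P (p - 1)" "P 0 \<noteq> P (p - 1)" using Pne[of 0 "p-1"] Pn0[of 0] Pn0[of "p-1"] p by auto
  have capp: "c w = (if w = P 0 then n0 else if w = n0 then P (p - 1) else if w = P (p - 1) then P 0 else w)" for w
    unfolding c_def using c3_apply[OF dc] by simp
  have cv: "c (v w) = u w" for w
  proof (cases "w \<in> ?N")
    case False then show ?thesis using uv_out[OF False] capp dc by auto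
  next
    case True
    then consider "w = n0" | j where "j < p" "w = P j" by blast
    then show ?thesis
    proof cases
      case 1 then show ?thesis using capp u v by simp
    next
      case (2 j)
      consider "Suc (Suc j) < p" | "j = p - 2" | "j = p - 1" using 2(1) p by linarith
      then show ?thesis
      proof cases
        case 1
        then have "P (Suc j) \<noteq> P 0" "P (Suc j) \<noteq> P (p - 1)" "P (Suc j) \<noteq> n0" using Pne Pn0 by auto
        then show ?thesis using 1 2 capp u(2) v(3) by simp
      next
        case 3
        then have "Suc j mod p = 0" using p by (simp add: Suc_diff_Suc)
        then show ?thesis using 3 2 capp u(2) v(5) dc by simp
      next
        case b: 2
        then have "Suc j = p - 1" using p by simp
        then show ?thesis using b 2 capp u(2) v(4) dc by simp
      qed
    qed
  qed
  have vp: "v permutes {1..n}" using G_perm[OF v(1)] .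
  have "c = u \<circ> inv' v"
  proof
    fix w
    have "c w = c (v (inv' v w))" using permutes_inverses(1)[OF vp] by simp
    then show "c w = (u \<circ> inv' v) w" using cv by simp
  qed
  then have cG: "c \<in> G" using G_comp[OF u(1) G_inv[OF v(1)]] by simp
  then have R0: "Rt G (P 0) n0 (P (p - 1))" using dc by (simp add: Rt_def c_def)
  have upow: "(u ^^ j) (P i) = P ((i + j) mod p)" if "i < p" for i j
  proof (induction j)
    case 0 then show ?case using that by simp
  next
    case (Suc j)
    have "(u ^^ Suc j) (P i) = u (P ((i + j) mod p))" using Suc by simp
    also have "\<dots> = P (Suc ((i + j) mod p) mod p)" using u(2) p by simp
    also have "\<dots> = P ((i + Suc j) mod p)" by (simp add: mod_Suc_eq)
    finally show ?case .
  qed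
  have upow0: "(u ^^ j) n0 = n0" for j by (induction j) (auto simp: u(3))
  have R1: "Rt G n0 (P i) (P (Suc i))" if "Suc i < p" for i
  proof -
    have "Rt G ((u ^^ Suc i) (P 0)) ((u ^^ Suc i) n0) ((u ^^ Suc i) (P (p - 1)))"
      by (rule Rt_conj[OF R0 G_pow[OF u(1)]])
    moreover have "(p - 1 + Suc i) mod p = i"
    proof -
      have "p - 1 + Suc i = i + p" using p by simp
      then show ?thesis using that by simp
    qed
    moreover have "(u ^^ Suc i) (P 0) = P (Suc i)" using upow[of 0 "Suc i"] that p by simp
    moreover have "(u ^^ Suc i) (P (p - 1)) = P i" using upow[of "p - 1" "Suc i"] p \<open>(p - 1 + Suc i) mod p = i\<close> by simp
    ultimately have "Rt G (P (Suc i)) n0 (P i)" by (simp only: upow0)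
    then show ?thesis using Rt_perms by blast
  qed
  have R2: "Rt G n0 (P 0) (P (Suc i))" if "Suc i < p" for i
    using that
  proof (induction i)
    case 0 then show ?case using R1[of 0] by simp
  next
    case (Suc i)
    have "Rt G n0 (P 0) (P (Suc i))" using Suc by simp
    then have a: "Rt G (P (Suc i)) n0 (P 0)" using Rt_perms by blast
    have b: "Rt G (P (Suc i)) n0 (P (Suc (Suc i)))" using R1[of "Suc i"] Suc.prems Rt_perms by blast
    show ?case using Rt_four[OF a b] Pne[of 0 "Suc (Suc i)"] Suc.prems by simp
  qed
  show ?thesis
  proof (rule Rt_all_from_cd[of n0 "P 0" ?N])
    fix w assume w: "w \<in> ?N" "w \<noteq> n0" "w \<noteq> P 0"
    then obtain j where j: "j < p" "w = P j" by blast
    with w have "j \<noteq> 0" by (metis)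
    then obtain i where "j = Suc i" using not0_implies_Suc by blast
    then show "Rt G n0 (P 0) w" using R2 j by simp
  qed (use dc p xyz in auto)
qed

end

lemma ext_perm:
  assumes A: "finite A" and D: "D \<subseteq> A" and inj: "inj_on \<pi> D" and im: "\<pi> ` D \<subseteq> A"
  shows "\<exists>\<sigma>. \<sigma> permutes A \<and> (\<forall>x\<in>D. \<sigma> x = \<pi> x)"
proof -
  have fD: "finite D" using finite_subset[OF D A] .
  have "card (A - D) = card (A - \<pi> ` D)"
    by (simp only: card_Diff_subset[OF fD D] card_Diff_subset[OF finite_imageI[OF fD] im] card_image[OF inj])
  then obtain \<beta> where \<beta>: "bij_betw \<beta> (A - D) (A - \<pi> ` D)"
    using finite_same_card_bij[OF finite_Diff[OF A] finite_Diff[OF A]] by blast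
  define \<sigma> where "\<sigma> x = (if x \<in> D then \<pi> x else if x \<in> A then \<beta> x else x)" for x
  have b1: "bij_betw \<sigma> D (\<pi> ` D)"
  proof -
    have "bij_betw \<pi> D (\<pi> ` D)" using inj by (rule inj_on_imp_bij_betw)
    moreover have "\<And>x. x \<in> D \<Longrightarrow> \<sigma> x = \<pi> x" by (simp add: \<sigma>_def)
    ultimately show ?thesis using bij_betw_cong by metis
  qed
  have b2: "bij_betw \<sigma> (A - D) (A - \<pi> ` D)"
  proof -
    have "\<And>x. x \<in> A - D \<Longrightarrow> \<sigma> x = \<beta> x" by (simp add: \<sigma>_def)
    then show ?thesis using \<beta> bij_betw_cong by metis
  qed
  have "bij_betw \<sigma> (D \<union> (A - D)) (\<pi> ` D \<union> (A - \<pi> ` D))"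
    by (rule bij_betw_combine[OF b1 b2]) blast
  moreover have "D \<union> (A - D) = A" "\<pi> ` D \<union> (A - \<pi> ` D) = A" using D im by blast+
  ultimately have "bij_betw \<sigma> A A" by simp
  moreover have "\<And>x. x \<notin> A \<Longrightarrow> \<sigma> x = x" using D by (auto simp: \<sigma>_def)
  ultimately have "\<sigma> permutes A" by (rule bij_imp_permutes)
  moreover have "\<forall>x\<in>D. \<sigma> x = \<pi> x" by (simp add: \<sigma>_def)
  ultimately show ?thesis by blast
qed
lemma fixed_pow: "\<sigma> x = x \<Longrightarrow> (\<sigma> ^^ n) x = x"
  by (induction n) auto

lemma agree_pow:
  assumes "\<And>x. x \<in> C \<Longrightarrow> \<sigma> x = \<tau> x" "\<tau> ` C \<subseteq> C" "x \<in> C"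
  shows "(\<sigma> ^^ n) x = (\<tau> ^^ n) x \<and> (\<tau> ^^ n) x \<in> C"
proof (induction n)
  case 0 then show ?case using assms(3) by simp
next
  case (Suc n)
  then have "\<sigma> ((\<tau> ^^ n) x) = \<tau> ((\<tau> ^^ n) x)" using assms(1) by blast
  then show ?case using Suc assms(2) by auto
qed

lemma pow_fix:
  assumes S: "\<sigma> permutes S" and A: "finite A" "\<sigma> ` A \<subseteq> A" "card A \<le> M" and x: "x \<in> A"
  shows "(\<sigma> ^^ (fact M * t)) x = x"
proof -
  have inA: "(\<sigma> ^^ i) x \<in> A" for i
  proof (induction i)
    case 0 then show ?case using x by simp
  next
    case (Suc i) then show ?case using A(2) by (simp add: image_subset_iff)
  qed
  have "\<not> inj_on (\<lambda>i. (\<sigma> ^^ i) x) {0..card A}"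
  proof
    assume "inj_on (\<lambda>i. (\<sigma> ^^ i) x) {0..card A}"
    then have "card ((\<lambda>i. (\<sigma> ^^ i) x) ` {0..card A}) = Suc (card A)" by (simp add: card_image)
    moreover have "(\<lambda>i. (\<sigma> ^^ i) x) ` {0..card A} \<subseteq> A" using inA by auto
    moreover note card_mono[OF A(1) calculation(2)]
    ultimately show False by linarith
  qed
  then obtain i j where ij: "i \<le> card A" "j \<le> card A" "i < j" "(\<sigma> ^^ i) x = (\<sigma> ^^ j) x"
    unfolding inj_on_def by (metis atLeastAtMost_iff linorder_neqE_nat zero_le)
  have injp: "inj (\<sigma> ^^ i)" using permutes_inj[OF permutes_funpow[OF S]] .
  have "(\<sigma> ^^ j) x = (\<sigma> ^^ i) ((\<sigma> ^^ (j - i)) x)"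
    using ij(3) by (metis funpow_add le_add_diff_inverse less_imp_le o_apply)
  then have l: "(\<sigma> ^^ (j - i)) x = x" using ij(4) injp by (metis injD)
  have "(j - i) dvd fact M" using ij A(3) by (intro dvd_fact) auto
  then obtain q where q: "fact M * t = (j - i) * (q * t)" by (metis dvd_def mult.assoc)
  have "((\<sigma> ^^ (j - i)) ^^ r) x = x" for r using l by (induction r) auto
  then have "(\<sigma> ^^ ((j - i) * (q * t))) x = x" by (simp add: funpow_mult)
  then show ?thesis unfolding q .
qed

lemma cyc_pow:
  assumes "distinct cs" "j < length cs"
  shows "(cycle_of_list cs ^^ n) (cs ! j) = cs ! ((n + j) mod length cs)"
proof -
  have "map (cycle_of_list cs ^^ n) cs = rotate n cs" by (rule cyclic_rotation[OF assms(1)])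
  then have "(cycle_of_list cs ^^ n) (cs ! j) = rotate n cs ! j" using assms(2)
    by (metis nth_map)
  then show ?thesis using assms(2) by (simp add: nth_rotate)
qed

locale schreier =
  fixes F :: "('a, 'b) monoid_scheme" and B S H \<Gamma>
  assumes grp: "group F" and fb: "free_basis F B" and Hdef: "H = generate F S"
    and Hsub: "subgroup H F" and Sfin: "finite S" and Ssub: "S \<subseteq> carrier F"
    and inf: "infinite (rcosets\<^bsub>F\<^esub> H)" and Gfin: "finite \<Gamma>" and Gsub: "\<Gamma> \<subseteq> carrier F - H"
    and two: "\<exists>a b. a \<in> B \<and> b \<in> B \<and> a \<noteq> b"
begin

definition wd :: "'a \<Rightarrow> ('a \<times> bool) list" where
  "wd g = (SOME w. set (map fst w) \<subseteq> B \<and> word_eval F w = g)"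

definition W where "W = wd ` (S \<union> \<Gamma>)"

definition act :: "'a \<Rightarrow> 'a set \<Rightarrow> 'a set" where
  "act g C = C #>\<^bsub>F\<^esub> inv\<^bsub>F\<^esub> g"

definition V where
  "V = insert H {act (word_eval F (drop i w)) H | w i. w \<in> W \<and> i \<le> length w}"

lemma BF: "B \<subseteq> carrier F" using fb by (simp add: free_basis_def)

lemma wd_props: "g \<in> carrier F \<Longrightarrow> set (map fst (wd g)) \<subseteq> B \<and> word_eval F (wd g) = g"
  unfolding wd_def using words_exist[OF grp fb] by (rule someI_ex) 

lemma W_props: "w \<in> W \<Longrightarrow> set (map fst w) \<subseteq> B"
  unfolding W_def using wd_props Ssub Gsub by blast

lemma W_fin: "finite W" unfolding W_def using Sfin Gfin by simp

lemma V_fin: "finite V"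
proof -
  have "{act (word_eval F (drop i w)) H | w i. w \<in> W \<and> i \<le> length w}
        \<subseteq> (\<lambda>(w, i). act (word_eval F (drop i w)) H) ` (SIGMA w:W. {..length w})" by auto
  moreover have "finite (SIGMA w:W. {..length w})" using W_fin by auto
  ultimately show ?thesis unfolding V_def by (meson finite_imageI finite_insert finite_subset)
qed

lemma HF: "H \<subseteq> carrier F" using Hsub subgroup.subset by blast

lemma act_coset: "y \<in> carrier F \<Longrightarrow> x \<in> carrier F \<Longrightarrow> act x (H #>\<^bsub>F\<^esub> y) = H #>\<^bsub>F\<^esub> (y \<otimes>\<^bsub>F\<^esub> inv\<^bsub>F\<^esub> x)"
  unfolding act_def using group.coset_mult_assoc[OF grp HF] group.inv_closed[OF grp] by blast

lemma act_H: "x \<in> carrier F \<Longrightarrow> act x H = H #>\<^bsub>F\<^esub> inv\<^bsub>F\<^esub> x"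
  unfolding act_def ..

lemma act_act:
  assumes "y \<in> carrier F" "x1 \<in> carrier F" "x2 \<in> carrier F"
  shows "act x1 (act x2 (H #>\<^bsub>F\<^esub> y)) = act (x1 \<otimes>\<^bsub>F\<^esub> x2) (H #>\<^bsub>F\<^esub> y)"
proof -
  have c: "y \<otimes>\<^bsub>F\<^esub> inv\<^bsub>F\<^esub> x2 \<in> carrier F" using assms grp by (simp add: group.inv_closed group.is_monoid monoid.m_closed)
  have x12: "x1 \<otimes>\<^bsub>F\<^esub> x2 \<in> carrier F" using assms grp by (simp add: group.is_monoid monoid.m_closed)
  have "act x1 (act x2 (H #>\<^bsub>F\<^esub> y)) = H #>\<^bsub>F\<^esub> (y \<otimes>\<^bsub>F\<^esub> inv\<^bsub>F\<^esub> x2 \<otimes>\<^bsub>F\<^esub> inv\<^bsub>F\<^esub> x1)"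
    using act_coset[OF assms(1,3)] act_coset[OF c assms(2)] by simp
  also have "\<dots> = H #>\<^bsub>F\<^esub> (y \<otimes>\<^bsub>F\<^esub> inv\<^bsub>F\<^esub> (x1 \<otimes>\<^bsub>F\<^esub> x2))"
    using assms grp by (simp add: group.inv_closed group.inv_mult_group monoid.m_assoc group.is_monoid)
  also have "\<dots> = act (x1 \<otimes>\<^bsub>F\<^esub> x2) (H #>\<^bsub>F\<^esub> y)" using act_coset[OF assms(1) x12] by simp
  finally show ?thesis .
qed

lemma act_one: "y \<in> carrier F \<Longrightarrow> act \<one>\<^bsub>F\<^esub> (H #>\<^bsub>F\<^esub> y) = H #>\<^bsub>F\<^esub> y"
  using grp act_coset[of y "\<one>\<^bsub>F\<^esub>"] by (simp add: group.is_monoid monoid.r_one monoid.inv_one)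

lemma H_coset: "H = H #>\<^bsub>F\<^esub> \<one>\<^bsub>F\<^esub>"
  using group.coset_mult_one[OF grp HF] by simp

lemma act_closed: "y \<in> carrier F \<Longrightarrow> x \<in> carrier F \<Longrightarrow> \<exists>z\<in>carrier F. act x (H #>\<^bsub>F\<^esub> y) = H #>\<^bsub>F\<^esub> z"
  using act_coset grp by (meson group.inv_closed monoid.m_closed group.is_monoid)

lemma word_carrier: "set (map fst w) \<subseteq> B \<Longrightarrow> word_eval F w \<in> carrier F"
  using group.word_eval_closed[OF grp] BF by blast

lemma V_coset: "C \<in> V \<Longrightarrow> \<exists>y\<in>carrier F. C = H #>\<^bsub>F\<^esub> y"
proof -
  assume "C \<in> V"
  then consider "C = H" | w i where "w \<in> W" "i \<le> length w" "C = act (word_eval F (drop i w)) H"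
    unfolding V_def by blast
  then show ?thesis
  proof cases
    case 1 then show ?thesis using H_coset grp by (metis monoid.one_closed group.is_monoid)
  next
    case (2 w i)
    have "set (map fst (drop i w)) \<subseteq> B" using W_props[OF 2(1)] by (auto dest: in_set_dropD)
    then have "word_eval F (drop i w) \<in> carrier F" by (rule word_carrier)
    then show ?thesis using 2(3) act_closed[of "\<one>\<^bsub>F\<^esub>"] H_coset grp
      by (metis monoid.one_closed group.is_monoid)
  qed
qed

lemma act_inv_act:
  assumes "C \<in> V" "x \<in> carrier F" shows "act (inv\<^bsub>F\<^esub> x) (act x C) = C"
proof -
  obtain y where y: "y \<in> carrier F" "C = H #>\<^bsub>F\<^esub> y" using V_coset[OF assms(1)] by blast
  have "act (inv\<^bsub>F\<^esub> x) (act x C) = act (inv\<^bsub>F\<^esub> x \<otimes>\<^bsub>F\<^esub> x) C"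
    using act_act[OF y(1) _ assms(2)] y(2) grp group.inv_closed assms(2) by metis
  also have "\<dots> = C" using grp assms(2) y act_one by (simp add: group.l_inv)
  finally show ?thesis .
qed

lemma act_act_inv:
  assumes "C \<in> V" "x \<in> carrier F" shows "act x (act (inv\<^bsub>F\<^esub> x) C) = C"
  using act_inv_act[OF assms(1) group.inv_closed[OF grp assms(2)]] grp assms(2) by (simp add: group.inv_inv)

lemma open_letter: "\<exists>a\<in>B. \<exists>C\<in>V. act a C \<notin> V"
proof (rule ccontr)
  assume "\<not> ?thesis"
  then have cl: "\<And>c C. c \<in> B \<Longrightarrow> C \<in> V \<Longrightarrow> act c C \<in> V" by blast
  have cl2: "act (inv\<^bsub>F\<^esub> c) C \<in> V" if c: "c \<in> B" and C: "C \<in> V" for c C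
  proof -
    have cF: "c \<in> carrier F" using c BF by blast
    have "inj_on (act c) V"
      by (rule inj_on_inverseI[of _ "act (inv\<^bsub>F\<^esub> c)"]) (rule act_inv_act[OF _ cF])
    moreover have "act c ` V \<subseteq> V" using cl c by blast
    ultimately have "act c ` V = V" using V_fin by (simp add: endo_inj_surj)
    then obtain C' where "C' \<in> V" "C = act c C'" using C by blast
    then show ?thesis using act_inv_act[OF _ cF] by simp
  qed
  have gen: "act g C \<in> V" if "g \<in> generate F B" "C \<in> V" for g C
    using that
  proof (induction g arbitrary: C rule: generate.induct)
    case one
    obtain y where "y \<in> carrier F" "C = H #>\<^bsub>F\<^esub> y" using V_coset[OF one] by blast
    then show ?case using act_one one by simp
  next
    case (incl h) then show ?case using cl by blast
  next
    case (inv h) then show ?case using cl2 by blast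
  next
    case (eng h1 h2)
    obtain y where y: "y \<in> carrier F" "C = H #>\<^bsub>F\<^esub> y" using V_coset[OF eng.prems] by blast
    have "h1 \<in> carrier F" "h2 \<in> carrier F" using eng.hyps fb by (auto simp: free_basis_def)
    then have "act (h1 \<otimes>\<^bsub>F\<^esub> h2) C = act h1 (act h2 C)" using act_act[OF y(1)] y(2) by simp
    then show ?case using eng by simp
  qed
  have "RCOSETS F H \<subseteq> V"
  proof
    fix Z assume "Z \<in> RCOSETS F H"
    then obtain x where x: "x \<in> carrier F" "Z = H #>\<^bsub>F\<^esub> x" unfolding RCOSETS_def by blast
    have ix: "inv\<^bsub>F\<^esub> x \<in> generate F B" using x(1) fb grp by (simp add: free_basis_def group.inv_closed)
    have "act (inv\<^bsub>F\<^esub> x) H = Z" using act_H x grp by (simp add: group.inv_closed group.inv_inv)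
    moreover have "H \<in> V" unfolding V_def by simp
    ultimately show "Z \<in> V" using gen[OF ix] by metis
  qed
  then show False using inf V_fin finite_subset by blast
qed

lemma suffix_V: "w \<in> W \<Longrightarrow> i \<le> length w \<Longrightarrow> act (word_eval F (drop i w)) H \<in> V"
  unfolding V_def by blast

lemma H_V: "H \<in> V" unfolding V_def by simp

end

context schreier begin

definition m where "m = card V"
definition e :: "'a set \<Rightarrow> nat" where "e = (SOME e. bij_betw e V {1..m})"
definition ei where "ei = inv_into V e"

lemma e_ex: "\<exists>e. bij_betw e V {1..m}"
proof -
  obtain h where h: "bij_betw h V {0..<m}" using ex_bij_betw_finite_nat[OF V_fin] unfolding m_def by blast
  have "bij_betw Suc {0..<m} {1..m}"
    by (simp add: bij_betw_def image_Suc_atLeastLessThan atLeastLessThanSuc_atLeastAtMost)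
  then show ?thesis using bij_betw_trans[OF h] by blast
qed

lemma e_bij: "bij_betw e V {1..m}"
  unfolding e_def using e_ex by (rule someI_ex)

lemma e_in: "C \<in> V \<Longrightarrow> e C \<in> {1..m}" using e_bij bij_betwE by blast
lemma e_inj: "C \<in> V \<Longrightarrow> C' \<in> V \<Longrightarrow> e C = e C' \<Longrightarrow> C = C'"
  using e_bij by (auto simp: bij_betw_def dest: inj_onD)
lemma ei_e: "C \<in> V \<Longrightarrow> ei (e C) = C"
  unfolding ei_def using e_bij by (simp add: bij_betw_def)
lemma e_surj: "x \<in> {1..m} \<Longrightarrow> \<exists>C\<in>V. x = e C"
  using e_bij by (auto simp: bij_betw_def)

definition Dom where "Dom c = {e C | C. C \<in> V \<and> act c C \<in> V}"
definition piL where "piL c x = e (act c (ei x))"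

lemma Dom_sub: "Dom c \<subseteq> {1..m}" unfolding Dom_def using e_in by blast

lemma pi_inj: "c \<in> B \<Longrightarrow> inj_on (piL c) (Dom c)"
proof (rule inj_onI)
  fix x y assume c: "c \<in> B" and xy: "x \<in> Dom c" "y \<in> Dom c" "piL c x = piL c y"
  obtain C where C: "C \<in> V" "act c C \<in> V" "x = e C" using xy(1) unfolding Dom_def by blast
  obtain D where D: "D \<in> V" "act c D \<in> V" "y = e D" using xy(2) unfolding Dom_def by blast
  have "e (act c C) = e (act c D)" using xy(3) C D by (simp add: piL_def ei_e)
  then have "act c C = act c D" using e_inj C D by blast
  moreover have cF: "c \<in> carrier F" using c BF by blast
  ultimately have "C = D" using act_inv_act[OF C(1) cF] act_inv_act[OF D(1) cF] by metis
  then show "x = y" using C D by simp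
qed

lemma pi_im: "piL c ` Dom c \<subseteq> {1..m}"
proof
  fix y assume "y \<in> piL c ` Dom c"
  then obtain C where "C \<in> V" "act c C \<in> V" "y = piL c (e C)" unfolding Dom_def by blast
  then show "y \<in> {1..m}" unfolding piL_def using ei_e e_in by simp
qed

definition sig0 where "sig0 c = (SOME \<sigma>. \<sigma> permutes {1..m} \<and> (\<forall>x\<in>Dom c. \<sigma> x = piL c x))"

lemma sig0: assumes "c \<in> B" shows "sig0 c permutes {1..m} \<and> (\<forall>x\<in>Dom c. sig0 c x = piL c x)"
proof -
  have "\<exists>\<sigma>. \<sigma> permutes {1..m} \<and> (\<forall>x\<in>Dom c. \<sigma> x = piL c x)"
    by (rule ext_perm[OF finite_atLeastAtMost Dom_sub pi_inj[OF assms] pi_im])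
  then show ?thesis unfolding sig0_def by (rule someI_ex)
qed

definition a0 where "a0 = (SOME a. a \<in> B \<and> (\<exists>C\<in>V. act a C \<notin> V))"
definition C0 where "C0 = (SOME C. C \<in> V \<and> act a0 C \<notin> V)"
definition x0 where "x0 = e C0"

lemma a0: "a0 \<in> B" "C0 \<in> V" "act a0 C0 \<notin> V"
proof -
  have "\<exists>a. a \<in> B \<and> (\<exists>C\<in>V. act a C \<notin> V)" using open_letter by blast
  then have "a0 \<in> B \<and> (\<exists>C\<in>V. act a0 C \<notin> V)" unfolding a0_def by (rule someI_ex)
  moreover then have "C0 \<in> V \<and> act a0 C0 \<notin> V" unfolding C0_def by (metis (mono_tags, lifting) someI_ex)
  ultimately show "a0 \<in> B" "C0 \<in> V" "act a0 C0 \<notin> V" by auto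
qed

lemma x0: "x0 \<in> {1..m}" "x0 \<notin> Dom a0"
proof -
  show "x0 \<in> {1..m}" unfolding x0_def using e_in a0 by blast
  show "x0 \<notin> Dom a0"
  proof
    assume "x0 \<in> Dom a0"
    then obtain C where C: "C \<in> V" "act a0 C \<in> V" "x0 = e C" unfolding Dom_def by blast
    have "C = C0" using e_inj[OF C(1) a0(2)] C(3) x0_def by simp
    then show False using C(2) a0(3) by simp
  qed
qed

definition b0 where "b0 = (SOME b. b \<in> B \<and> b \<noteq> a0)"

lemma b0: "b0 \<in> B" "b0 \<noteq> a0"
proof -
  obtain a b where ab: "a \<in> B" "b \<in> B" "a \<noteq> b" using two by blast
  have "\<exists>b. b \<in> B \<and> b \<noteq> a0"
  proof (cases "a = a0")
    case True then show ?thesis using ab by blast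
  next
    case False then show ?thesis using ab by blast
  qed
  then have "b0 \<in> B \<and> b0 \<noteq> a0" unfolding b0_def by (rule someI_ex)
  then show "b0 \<in> B" "b0 \<noteq> a0" by auto
qed

definition K :: nat where "K = fact (m + 3)"
definition p :: nat where "p = K + 1"
definition n0 :: nat where "n0 = m + 1"
definition P :: "nat \<Rightarrow> nat" where "P j = m + 2 + j"
definition d1 :: nat where "d1 = m + p + 2"
definition d2 :: nat where "d2 = m + p + 3"
definition kk :: nat where "kk = m + p + 3"
definition Ps where "Ps = map P [0..<p]"
definition Qs where "Qs = n0 # map P [0..<p - 1]"
definition zeta where "zeta = cycle_of_list Ps"
definition xi where "xi = cycle_of_list Qs"
definition cyc4 where "cyc4 = cycle_of_list [x0, n0, d1, d2]"
definition sa where "sa = sig0 a0 \<circ> cyc4 \<circ> zeta"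
definition sb1 where "sb1 = sig0 b0 \<circ> xi"
definition sb where "sb = (if evenperm sb1 then sb1 \<circ> transpose d1 d2 else sb1)"
definition phi where "phi c = (if c = a0 then sa else if c = b0 then sb else sig0 c)"

lemma K_ge: "m + 3 \<le> K" "1 \<le> K"
proof -
  show "m + 3 \<le> K" unfolding K_def by (rule fact_ge_self)
  then show "1 \<le> K" by linarith
qed
lemma p_ge: "m + 4 \<le> p" "3 \<le> p" using K_ge unfolding p_def by auto

lemma set_Ps: "set Ps = P ` {..<p}" unfolding Ps_def by auto
lemma set_Qs: "set Qs = insert n0 (P ` {..<p - 1})" unfolding Qs_def by auto
lemma len_Ps: "length Ps = p" unfolding Ps_def by simp
lemma len_Qs: "length Qs = p" unfolding Qs_def using p_ge by simp
lemma Ps_nth: "j < p \<Longrightarrow> Ps ! j = P j" unfolding Ps_def by simp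
lemma Qs_nth0: "Qs ! 0 = n0" unfolding Qs_def by simp
lemma Qs_nth: "j < p - 1 \<Longrightarrow> Qs ! Suc j = P j" unfolding Qs_def by simp
lemma dist_Ps: "distinct Ps" unfolding Ps_def by (simp add: distinct_map inj_on_def P_def)

lemma inj_P: "inj P" unfolding P_def by (rule injI) simp
lemma dist_Qs: "distinct Qs"
proof -
  have "distinct (map P [0..<p - 1])" by (simp add: distinct_map inj_on_subset[OF inj_P])
  moreover have "n0 \<notin> set (map P [0..<p - 1])" by (auto simp: P_def n0_def)
  ultimately show ?thesis unfolding Qs_def by simp
qed

lemma sig0_out: "c \<in> B \<Longrightarrow> x \<notin> {1..m} \<Longrightarrow> sig0 c x = x"
  using sig0[THEN conjunct1] by (rule permutes_not_in)

lemma sig0_in: "c \<in> B \<Longrightarrow> x \<in> {1..m} \<Longrightarrow> sig0 c x \<in> {1..m}"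
  using sig0[THEN conjunct1, THEN permutes_in_image] by blast

lemma perm_kk_sig0: "c \<in> B \<Longrightarrow> sig0 c permutes {1..kk}"
  using sig0 by (rule permutes_subset[OF conjunct1]) (auto simp: kk_def)

lemma perm_kk_zeta: "zeta permutes {1..kk}"
  unfolding zeta_def by (rule permutes_subset[OF cycle_permutes]) (auto simp: set_Ps P_def kk_def)

lemma perm_kk_xi: "xi permutes {1..kk}"
  unfolding xi_def by (rule permutes_subset[OF cycle_permutes])
    (use p_ge in \<open>auto simp: set_Qs P_def kk_def n0_def\<close>)

lemma perm_kk_cyc4: "cyc4 permutes {1..kk}"
  unfolding cyc4_def by (rule permutes_subset[OF cycle_permutes])
    (use x0(1) in \<open>auto simp: kk_def n0_def d1_def d2_def\<close>)

lemma perm_kk_tr: "transpose d1 d2 permutes {1..kk}"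
  by (rule permutes_swap_id) (auto simp: kk_def d1_def d2_def)

lemma perm_kk_sa: "sa permutes {1..kk}"
  unfolding sa_def using perm_kk_sig0[OF a0(1)] perm_kk_cyc4 perm_kk_zeta
  by (simp add: permutes_compose)

lemma perm_kk_sb1: "sb1 permutes {1..kk}"
  unfolding sb1_def using perm_kk_sig0[OF b0(1)] perm_kk_xi by (simp add: permutes_compose)

lemma perm_kk_sb: "sb permutes {1..kk}"
  unfolding sb_def using perm_kk_sb1 perm_kk_tr by (simp add: permutes_compose)

lemma perm_kk_phi: "c \<in> B \<Longrightarrow> phi c permutes {1..kk}"
  unfolding phi_def using perm_kk_sa perm_kk_sb perm_kk_sig0 by simp

lemma sb_odd: "\<not> evenperm sb"
proof -
  have p1: "permutation sb1" using perm_kk_sb1 permutation_permutes by blast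
  have p2: "permutation (transpose d1 d2)" using perm_kk_tr permutation_permutes by blast
  have "d1 \<noteq> d2" by (simp add: d1_def d2_def)
  then have "\<not> evenperm (transpose d1 d2)" by (simp add: evenperm_swap)
  then show ?thesis unfolding sb_def using evenperm_comp[OF p1 p2] by auto
qed

lemma phi_agree:
  assumes c: "c \<in> B" and x: "x \<in> Dom c" shows "phi c x = piL c x"
proof -
  have xm: "x \<in> {1..m}" using x Dom_sub by blast
  have z: "zeta x = x" unfolding zeta_def by (rule id_outside_supp) (use xm in \<open>auto simp: set_Ps P_def\<close>)
  have xi: "xi x = x" unfolding xi_def by (rule id_outside_supp) (use xm in \<open>auto simp: set_Qs P_def n0_def\<close>)
  have t: "transpose d1 d2 x = x" using xm by (auto simp: d1_def d2_def)
  show ?thesis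
  proof (cases "c = a0")
    case True
    have "x \<noteq> x0" using x x0(2) True by blast
    then have "cyc4 x = x" unfolding cyc4_def
      by (intro id_outside_supp) (use xm in \<open>auto simp: n0_def d1_def d2_def\<close>)
    then show ?thesis using True z sig0[OF c] x by (simp add: phi_def sa_def)
  next
    case False
    show ?thesis
    proof (cases "c = b0")
      case True
      then show ?thesis using False xi t sig0[OF c] x by (simp add: phi_def sb_def sb1_def)
    next
      case False': False
      then show ?thesis using False sig0[OF c] x by (simp add: phi_def)
    qed
  qed
qed

end

context schreier begin

definition ff where "ff = fext F B (sym_group kk) phi"

lemma phi_carrier: "phi ` B \<subseteq> carrier (sym_group kk)"
  using perm_kk_phi by (auto simp: sym_group_carrier)

lemma ff_hom: "ff \<in> hom F (sym_group kk)"
  unfolding ff_def by (rule fext_hom[OF grp fb sym_group_is_group phi_carrier])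

lemma ff_gen: "c \<in> B \<Longrightarrow> ff c = phi c"
  unfolding ff_def by (rule fext_gen[OF grp fb sym_group_is_group phi_carrier])

lemma ff_word: "set (map fst w) \<subseteq> B \<Longrightarrow> ff (word_eval F w) = word_eval (sym_group kk) (mapw phi w)"
  unfolding ff_def by (rule fext_word[OF grp fb sym_group_is_group phi_carrier])

lemma act_act_H:
  assumes "x1 \<in> carrier F" "x2 \<in> carrier F"
  shows "act x1 (act x2 H) = act (x1 \<otimes>\<^bsub>F\<^esub> x2) H"
proof -
  have o: "\<one>\<^bsub>F\<^esub> \<in> carrier F" using grp by (simp add: group.is_monoid monoid.one_closed)
  show ?thesis using act_act[OF o assms] H_coset by simp
qed

lemma sym_inv: "c \<in> B \<Longrightarrow> inv\<^bsub>sym_group kk\<^esub> (phi c) = inv' (phi c)"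
  using phi_carrier by (intro sym_group_inv_equality) blast

lemma path:
  "set (map fst ws) \<subseteq> B \<Longrightarrow> (\<forall>j \<le> length ws. act (word_eval F (drop j ws)) H \<in> V) \<Longrightarrow>
   word_eval (sym_group kk) (mapw phi ws) (e H) = e (act (word_eval F ws) H)"
proof (induction ws)
  case Nil
  have "act \<one>\<^bsub>F\<^esub> H = H" using act_one[of "\<one>\<^bsub>F\<^esub>"] H_coset grp
    by (metis group.is_monoid monoid.one_closed)
  then show ?case by (simp add: sym_group_one)
next
  case (Cons l rest)
  obtain x b where l: "l = (x, b)" by force
  have xB: "x \<in> B" and rB: "set (map fst rest) \<subseteq> B" using Cons.prems(1) l by auto
  have xF: "x \<in> carrier F" using xB BF by blast
  have rF: "word_eval F rest \<in> carrier F" using word_carrier[OF rB] .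
  define C1 where "C1 = act (word_eval F rest) H"
  define C2 where "C2 = act (word_eval F (l # rest)) H"
  have C1V: "C1 \<in> V" using Cons.prems(2)[rule_format, of 1] unfolding C1_def by simp
  have C2V: "C2 \<in> V" using Cons.prems(2)[rule_format, of 0] unfolding C2_def by simp
  have IH: "word_eval (sym_group kk) (mapw phi rest) (e H) = e C1"
    unfolding C1_def
  proof (rule Cons.IH[OF rB], intro allI impI)
    fix j assume "j \<le> length rest"
    then show "act (word_eval F (drop j rest)) H \<in> V"
      using Cons.prems(2)[rule_format, of "Suc j"] by simp
  qed
  define lv where "lv = (if b then x else inv\<^bsub>F\<^esub> x)"
  have lvF: "lv \<in> carrier F" using xF grp by (simp add: lv_def group.inv_closed)
  have C2eq: "C2 = act lv C1"
    unfolding C2_def C1_def l using act_act_H[OF lvF rF] by (simp add: lv_def)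
  have ws: "word_eval (sym_group kk) (mapw phi (l # rest)) (e H) =
        (if b then phi x else inv' (phi x)) (word_eval (sym_group kk) (mapw phi rest) (e H))"
    using sym_inv[OF xB] by (simp add: l sym_group_mult)
  show ?case
  proof (cases b)
    case True
    then have "act x C1 \<in> V" using C2eq C2V lv_def by simp
    then have "e C1 \<in> Dom x" using C1V unfolding Dom_def by blast
    then have "phi x (e C1) = e (act x C1)" using phi_agree[OF xB] by (simp add: piL_def ei_e[OF C1V])
    then show ?thesis using ws IH True C2eq lv_def C2_def by simp
  next
    case False
    then have C2': "C2 = act (inv\<^bsub>F\<^esub> x) C1" using C2eq lv_def by simp
    then have "act x C2 = C1" using act_act_inv[OF C1V xF] by simp
    then have "e C2 \<in> Dom x" using C1V C2V unfolding Dom_def by blast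
    then have "phi x (e C2) = e C1" using phi_agree[OF xB] \<open>act x C2 = C1\<close> by (simp add: piL_def ei_e[OF C2V])
    then have "inv' (phi x) (e C1) = e C2"
      using permutes_inverses(2)[OF perm_kk_phi[OF xB]] by metis
    then show ?thesis using ws IH False C2_def by simp
  qed
qed

lemma path_W:
  assumes "w \<in> W" "i \<le> length w"
  shows "ff (word_eval F (drop i w)) (e H) = e (act (word_eval F (drop i w)) H)"
proof -
  have s: "set (map fst (drop i w)) \<subseteq> B" using W_props[OF assms(1)] by (auto dest: in_set_dropD)
  have "\<forall>j \<le> length (drop i w). act (word_eval F (drop j (drop i w))) H \<in> V"
    using suffix_V[OF assms(1)] assms(2) by (auto simp: add.commute)
  then show ?thesis using path[OF s] ff_word[OF s] by simp
qed

end

lemma perm_maps: "\<sigma> permutes S \<Longrightarrow> S \<subseteq> A \<Longrightarrow> x \<in> A \<Longrightarrow> \<sigma> x \<in> A"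
  by (metis permutes_in_image permutes_not_in subsetD)

context schreier begin

lemma KK_mod: "(K * K + j) mod p = Suc j mod p"
proof -
  obtain k' where k': "K = Suc k'" using K_ge(2) by (metis Suc_le_D One_nat_def)
  have "K * K + j = p * k' + Suc j" unfolding p_def k' by (simp add: algebra_simps)
  then show ?thesis by simp
qed

lemma P_ne: "P i \<noteq> n0" "P i \<le> m \<Longrightarrow> False" "P i \<noteq> d1 \<or> p \<le> i" "P i \<noteq> d2 \<or> p < i"
  by (auto simp: P_def n0_def d1_def d2_def)

lemma sa_on_Ps: "y \<in> set Ps \<Longrightarrow> sa y = zeta y"
proof -
  assume y: "y \<in> set Ps"
  have zy: "zeta y \<in> set Ps" using y cycle_permutes[of Ps] unfolding zeta_def
    by (simp add: permutes_in_image)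
  have small: "z \<in> set Ps \<Longrightarrow> m + 2 \<le> z \<and> z < m + 2 + p" for z by (auto simp: set_Ps P_def)
  have "cyc4 (zeta y) = zeta y" unfolding cyc4_def
    by (rule id_outside_supp) (use small[OF zy] x0(1) in \<open>auto simp: n0_def d1_def d2_def\<close>)
  moreover have "sig0 a0 (zeta y) = zeta y" using sig0_out[OF a0(1)] small[OF zy] by simp
  ultimately show ?thesis by (simp add: sa_def)
qed

lemma u_P: "j < p \<Longrightarrow> (sa ^^ (K * K)) (P j) = P (Suc j mod p)"
proof -
  assume j: "j < p"
  have inP: "P j \<in> set Ps" using j by (simp add: set_Ps)
  have sub: "zeta ` set Ps \<subseteq> set Ps" using cycle_permutes[of Ps] unfolding zeta_def
    by (simp add: permutes_image)
  have "(sa ^^ (K * K)) (P j) = (zeta ^^ (K * K)) (P j)"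
    using agree_pow[OF sa_on_Ps sub inP] by blast
  also have "\<dots> = (zeta ^^ (K * K)) (Ps ! j)" using Ps_nth j by simp
  also have "\<dots> = Ps ! ((K * K + j) mod p)" unfolding zeta_def using cyc_pow[OF dist_Ps] j len_Ps by simp
  also have "\<dots> = P (Suc j mod p)" using KK_mod Ps_nth p_ge by simp
  finally show ?thesis .
qed

definition Aa where "Aa = {1..m} \<union> {n0, d1, d2}"
definition Ab where "Ab = {1..m} \<union> {d1, d2, P (p - 1)}"

lemma card3: "card {a, b, c::nat} \<le> 3"
proof -
  have "card {a, b, c} \<le> Suc (card {b, c})" by (simp add: card_insert_if)
  moreover have "card {b, c} \<le> Suc (card {c})" by (simp add: card_insert_if)
  ultimately show ?thesis by simp
qed

lemma card_Aa: "card Aa \<le> m + 3"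
proof -
  have "card Aa \<le> card {1..m} + card {n0, d1, d2}" unfolding Aa_def by (rule card_Un_le)
  then show ?thesis using card3[of n0 d1 d2] by simp
qed

lemma card_Ab: "card Ab \<le> m + 3"
proof -
  have "card Ab \<le> card {1..m} + card {d1, d2, P (p - 1)}" unfolding Ab_def by (rule card_Un_le)
  then show ?thesis using card3[of d1 d2 "P (p - 1)"] by simp
qed

lemma sa_Aa: "sa ` Aa \<subseteq> Aa"
proof
  fix y assume "y \<in> sa ` Aa"
  then obtain x where x: "x \<in> Aa" "y = sa x" by blast
  have "x \<notin> set Ps" using x(1) p_ge by (auto simp: Aa_def set_Ps P_def n0_def d1_def d2_def)
  then have z: "zeta x = x" unfolding zeta_def by (rule id_outside_supp)
  have c: "cyc4 x \<in> Aa" using perm_maps[OF cycle_permutes[of "[x0, n0, d1, d2]"] _ x(1)] x0(1)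
    unfolding cyc4_def Aa_def by auto
  have "sig0 a0 (cyc4 x) \<in> Aa" using perm_maps[OF sig0[OF a0(1), THEN conjunct1] _ c] by (auto simp: Aa_def)
  then show "y \<in> Aa" using x(2) z by (simp add: sa_def)
qed

lemma u_Aa: "x \<in> Aa \<Longrightarrow> (sa ^^ (K * K)) x = x"
  using pow_fix[OF perm_kk_sa _ sa_Aa card_Aa, of x K] by (simp add: Aa_def K_def)

lemma u_out: "x \<notin> {1..kk} \<Longrightarrow> (sa ^^ n) x = x"
  using fixed_pow permutes_not_in[OF perm_kk_sa] by metis

lemma v_out: "x \<notin> {1..kk} \<Longrightarrow> (sb ^^ n) x = x"
  using fixed_pow permutes_not_in[OF perm_kk_sb] by metis

lemma sb_on_Qs: "y \<in> set Qs \<Longrightarrow> sb y = xi y"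
proof -
  assume y: "y \<in> set Qs"
  have xy: "xi y \<in> set Qs" using y cycle_permutes[of Qs] unfolding xi_def
    by (simp add: permutes_in_image)
  have small: "z \<in> set Qs \<Longrightarrow> m + 1 \<le> z \<and> z < m + 1 + p" for z
    using p_ge by (auto simp: set_Qs P_def n0_def)
  have t: "transpose d1 d2 y = y" using small[OF y] by (auto simp: d1_def d2_def)
  have "sig0 b0 (xi y) = xi y" using sig0_out[OF b0(1)] small[OF xy] by simp
  then have "sb1 y = xi y" by (simp add: sb1_def)
  then show ?thesis using t by (simp add: sb_def)
qed

lemma v_Qs: "j < p \<Longrightarrow> (sb ^^ (K * K)) (Qs ! j) = Qs ! (Suc j mod p)"
proof -
  assume j: "j < p"
  have inQ: "Qs ! j \<in> set Qs" using j len_Qs by simp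
  have sub: "xi ` set Qs \<subseteq> set Qs" using cycle_permutes[of Qs] unfolding xi_def
    by (simp add: permutes_image)
  have "(sb ^^ (K * K)) (Qs ! j) = (xi ^^ (K * K)) (Qs ! j)"
    using agree_pow[OF sb_on_Qs sub inQ] by blast
  also have "\<dots> = Qs ! ((K * K + j) mod p)" unfolding xi_def using cyc_pow[OF dist_Qs] j len_Qs by simp
  also have "\<dots> = Qs ! (Suc j mod p)" using KK_mod by simp
  finally show ?thesis .
qed

lemma sb_Ab: "sb ` Ab \<subseteq> Ab"
proof
  fix y assume "y \<in> sb ` Ab"
  then obtain x where x: "x \<in> Ab" "y = sb x" by blast
  have nq: "w \<notin> set Qs" if "w \<in> Ab" for w using that p_ge
    by (auto simp: Ab_def set_Qs P_def n0_def d1_def d2_def)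
  have zz: "xi w = w" if "w \<in> Ab" for w unfolding xi_def by (rule id_outside_supp[OF nq[OF that]])
  have t: "transpose d1 d2 x \<in> Ab" using x(1) by (auto simp: Ab_def transpose_def)
  have s: "sig0 b0 z \<in> Ab" if "z \<in> Ab" for z
    using perm_maps[OF sig0[OF b0(1), THEN conjunct1] _ that] by (auto simp: Ab_def)
  have "sb x = sig0 b0 x \<or> sb x = sig0 b0 (transpose d1 d2 x)"
    using zz[OF x(1)] zz[OF t] by (auto simp: sb_def sb1_def)
  then show "y \<in> Ab" using x s t by auto
qed

lemma v_Ab: "x \<in> Ab \<Longrightarrow> (sb ^^ (K * K)) x = x"
  using pow_fix[OF perm_kk_sb _ sb_Ab card_Ab, of x K] by (simp add: Ab_def K_def)

end

context schreier begin

definition GG where "GG = ff ` carrier F"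
definition NN where "NN = insert n0 (P ` {..<p})"

lemma ghom: "group_hom F (sym_group kk) ff"
  by (simp add: group_hom_def group_hom_axioms_def grp sym_group_is_group ff_hom)

lemma sgG: "subgroup GG (sym_group kk)"
  unfolding GG_def by (rule group_hom.img_is_subgroup[OF ghom])

lemma a0F: "a0 \<in> carrier F" using a0(1) BF by blast
lemma b0F: "b0 \<in> carrier F" using b0(1) BF by blast

lemma sa_G: "sa \<in> GG"
proof -
  have "ff a0 = sa" using ff_gen[OF a0(1)] by (simp add: phi_def)
  then show ?thesis unfolding GG_def using a0F by force
qed

lemma sb_G: "sb \<in> GG"
proof -
  have "ff b0 = sb" using ff_gen[OF b0(1)] b0(2) by (simp add: phi_def)
  then show ?thesis unfolding GG_def using b0F by force
qed

lemma not_NN: "x \<in> {1..kk} \<Longrightarrow> x \<notin> NN \<Longrightarrow> x \<in> Aa \<and> x \<in> Ab"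
proof -
  assume x: "x \<in> {1..kk}" "x \<notin> NN"
  have "x \<in> {1..m} \<or> x = d1 \<or> x = d2"
  proof (rule ccontr)
    assume c: "\<not> ?thesis"
    then have "m + 1 \<le> x" "x \<le> m + p + 1" using x(1) by (auto simp: kk_def d1_def d2_def)
    moreover have "x \<noteq> n0" using x(2) by (simp add: NN_def)
    ultimately have "m + 2 \<le> x" by (simp add: n0_def)
    then have "x = P (x - (m + 2))" "x - (m + 2) < p" using \<open>x \<le> m + p + 1\<close> by (auto simp: P_def)
    then have "x \<in> NN" unfolding NN_def by (metis image_eqI insertI2 lessThan_iff)
    then show False using x(2) by simp
  qed
  then show ?thesis by (auto simp: Aa_def Ab_def)
qed

lemma all_NN:
  assumes "x \<in> NN" "y \<in> NN" "z \<in> NN" "x \<noteq> y" "y \<noteq> z" "x \<noteq> z"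
  shows "Rt GG x y z"
proof -
  let ?u = "sa ^^ (K * K)" and ?v = "sb ^^ (K * K)"
  have uG: "?u \<in> GG" by (rule G_pow[OF sgG sa_G])
  have vG: "?v \<in> GG" by (rule G_pow[OF sgG sb_G])
  have injP: "inj_on P {..<p}" using inj_P inj_on_subset by blast
  have n0P: "n0 \<notin> P ` {..<p}" by (auto simp: P_def n0_def)
  have n0A: "n0 \<in> Aa" by (simp add: Aa_def)
  have u1: "?u n0 = n0" using u_Aa[OF n0A] .
  have pp: "3 \<le> p" using p_ge by simp
  have v1: "?v n0 = P 0"
    using v_Qs[of 0] Qs_nth0 Qs_nth[of 0] pp by simp
  have v2: "?v (P j) = P (Suc j)" if "Suc (Suc j) < p" for j
  proof -
    have "P j = Qs ! Suc j" using Qs_nth[of j] that by simp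
    moreover have "?v (Qs ! Suc j) = Qs ! Suc (Suc j)" using v_Qs[of "Suc j"] that by simp
    moreover have "Qs ! Suc (Suc j) = P (Suc j)" using Qs_nth[of "Suc j"] that by simp
    ultimately show ?thesis by simp
  qed
  have v3: "?v (P (p - 2)) = n0"
  proof -
    have "P (p - 2) = Qs ! Suc (p - 2)" using Qs_nth[of "p - 2"] pp by simp
    moreover have "Suc (p - 2) = p - 1" "Suc (p - 1) = p" using pp by auto
    ultimately have "?v (P (p - 2)) = Qs ! (p mod p)" using v_Qs[of "p - 1"] pp by simp
    then show ?thesis using Qs_nth0 by simp
  qed
  have v4: "?v (P (p - 1)) = P (p - 1)" using v_Ab by (simp add: Ab_def)
  have out: "?u w = w \<and> ?v w = w" if "w \<notin> insert n0 (P ` {..<p})" for w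
  proof (cases "w \<in> {1..kk}")
    case True
    then have "w \<in> Aa \<and> w \<in> Ab" using not_NN that unfolding NN_def by blast
    then show ?thesis using u_Aa v_Ab by simp
  next
    case False then show ?thesis using u_out v_out by simp
  qed
  show ?thesis
    by (rule Rt_design[OF sgG pp injP n0P uG u_P u1 vG v1 v2 v3 v4 out])
      (use assms in \<open>auto simp: NN_def\<close>)
qed

lemma hom_one_id: "ff \<one>\<^bsub>F\<^esub> = id"
  using group_hom.hom_one[OF ghom] by (simp add: sym_group_one)

lemma ff_perm: "h \<in> carrier F \<Longrightarrow> ff h permutes {1..kk}"
  using ff_hom by (auto simp: hom_def sym_group_carrier)

lemma reach: "C \<in> V \<Longrightarrow> \<exists>h\<in>carrier F. ff h (e H) = e C"
proof -
  assume "C \<in> V"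
  then consider "C = H" | w i where "w \<in> W" "i \<le> length w" "C = act (word_eval F (drop i w)) H"
    unfolding V_def by blast
  then show ?thesis
  proof cases
    case 1 then show ?thesis using hom_one_id grp by (metis group.is_monoid monoid.one_closed id_apply)
  next
    case (2 w i)
    have "set (map fst (drop i w)) \<subseteq> B" using W_props[OF 2(1)] by (auto dest: in_set_dropD)
    then have "word_eval F (drop i w) \<in> carrier F" by (rule word_carrier)
    then show ?thesis using path_W[OF 2(1,2)] 2(3) by blast
  qed
qed

lemma cyc4_vals: "cyc4 x0 = n0" "cyc4 n0 = d1" "cyc4 d1 = d2"
proof -
  have d: "distinct [x0, n0, d1, d2]" using x0(1) by (auto simp: n0_def d1_def d2_def)
  have "(cyc4 ^^ 1) ([x0, n0, d1, d2] ! j) = [x0, n0, d1, d2] ! ((1 + j) mod 4)" if "j < 4" for j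
    unfolding cyc4_def using cyc_pow[OF d, of j 1] that by simp
  from this[of 0] this[of 1] this[of 2] show "cyc4 x0 = n0" "cyc4 n0 = d1" "cyc4 d1 = d2" by simp_all
qed

lemma sa_vals: "sa x0 = n0" "sa n0 = d1" "sa d1 = d2"
proof -
  have z: "zeta w = w" if "w \<le> m + 1 \<or> m + p + 2 \<le> w" for w
    unfolding zeta_def by (rule id_outside_supp) (use that in \<open>auto simp: set_Ps P_def\<close>)
  have s: "sig0 a0 w = w" if "m < w" for w using sig0_out[OF a0(1)] that by simp
  show "sa x0 = n0" using z[of x0] x0(1) cyc4_vals s[of n0] by (simp add: sa_def n0_def)
  show "sa n0 = d1" using z[of n0] cyc4_vals s[of d1] by (simp add: sa_def n0_def d1_def)
  show "sa d1 = d2" using z[of d1] cyc4_vals s[of d2] by (simp add: sa_def d1_def d2_def)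
qed

lemma transitive: "x \<in> {1..kk} \<Longrightarrow> \<exists>g\<in>GG. g x \<in> NN"
proof -
  assume x: "x \<in> {1..kk}"
  have idG: "id \<in> GG" using G_id[OF sgG] .
  have sap: "sa permutes {1..kk}" using perm_kk_sa .
  show ?thesis
  proof (cases "x \<in> NN")
    case True then show ?thesis using idG by (intro bexI[of _ id]) auto
  next
    case False
    then have "x \<in> {1..m} \<or> x = d1 \<or> x = d2" using not_NN[OF x] by (auto simp: Aa_def Ab_def P_def n0_def)
    then consider "x \<in> {1..m}" | "x = d1" | "x = d2" by blast
    then show ?thesis
    proof cases
      case 1
      obtain C where C: "C \<in> V" "x = e C" using e_surj[OF 1] by blast
      obtain h where h: "h \<in> carrier F" "ff h (e H) = e C" using reach[OF C(1)] by blast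
      obtain h0 where h0: "h0 \<in> carrier F" "ff h0 (e H) = x0" using reach[OF a0(2)] x0_def by metis
      define g where "g = sa \<circ> ff h0 \<circ> inv' (ff h)"
      have "ff h \<in> GG" "ff h0 \<in> GG" using h h0 by (auto simp: GG_def)
      then have gG: "g \<in> GG" unfolding g_def using sa_G G_comp[OF sgG] G_inv[OF sgG] by metis
      have "inv' (ff h) x = e H" using permutes_inverses(2)[OF ff_perm[OF h(1)]] h(2) C(2) by metis
      then have "g x = n0" unfolding g_def using h0(2) sa_vals by simp
      then show ?thesis using gG by (force simp: NN_def)
    next
      case 2
      have "inv' sa d1 = n0" using permutes_inverses(2)[OF sap] sa_vals by metis
      then show ?thesis using G_inv[OF sgG sa_G] 2 by (force simp: NN_def)
    next
      case 3
      have "inv' sa d1 = n0" "inv' sa d2 = d1" using permutes_inverses(2)[OF sap] sa_vals by metis+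
      moreover have "inv' sa \<circ> inv' sa \<in> GG" using G_inv[OF sgG sa_G] G_comp[OF sgG] by blast
      ultimately show ?thesis using 3 by (intro bexI[of _ "inv' sa \<circ> inv' sa"]) (auto simp: NN_def)
    qed
  qed
qed

lemma GG_full: "GG = carrier (sym_group kk)"
proof (rule G_full[OF sgG _ sb_G sb_odd])
  fix x y z assume xyz: "x \<in> {1..kk}" "y \<in> {1..kk}" "z \<in> {1..kk}" "x \<noteq> y" "y \<noteq> z" "x \<noteq> z"
  have sub: "NN \<subseteq> {1..kk}" by (auto simp: NN_def P_def n0_def kk_def)
  have n0P: "n0 \<notin> P ` {..<p}" by (auto simp: P_def n0_def)
  have cP: "card (P ` {..<p}) = p" using card_image[OF inj_on_subset[OF inj_P, of "{..<p}"]] by simp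
  have "card NN = Suc p" unfolding NN_def using n0P cP by simp
  then have "kk + 2 \<le> 2 * card NN" using p_ge by (simp add: kk_def)
  then show "Rt GG x y z" using Rt_big[OF sgG sub all_NN _ transitive xyz] by blast
qed

end

context schreier begin

lemma S_fix: "s \<in> S \<Longrightarrow> ff s (e H) = e H"
proof -
  assume s: "s \<in> S"
  have sF: "s \<in> carrier F" using s Ssub by blast
  have wW: "wd s \<in> W" unfolding W_def using s by blast
  have ev: "word_eval F (wd s) = s" using wd_props[OF sF] by simp
  have "ff s (e H) = e (act s H)" using path_W[OF wW, of 0] ev by simp
  moreover have "inv\<^bsub>F\<^esub> s \<in> H" using s Hdef by (simp add: generate.inv)
  then have "act s H = H" unfolding act_def
    using group.coset_join2[OF grp _ Hsub] group.inv_closed[OF grp sF] by blast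
  ultimately show ?thesis by simp
qed

lemma H_fix: "h \<in> H \<Longrightarrow> ff h (e H) = e H"
proof -
  assume "h \<in> H"
  then have "h \<in> generate F S" using Hdef by simp
  then show ?thesis
  proof (induction h rule: generate.induct)
    case one then show ?case using hom_one_id by simp
  next
    case (incl h) then show ?case by (rule S_fix)
  next
    case (inv h)
    have hF: "h \<in> carrier F" using inv Ssub by blast
    have "ff (inv\<^bsub>F\<^esub> h) = inv\<^bsub>sym_group kk\<^esub> (ff h)" using group_hom.hom_inv[OF ghom hF] .
    also have "\<dots> = inv' (ff h)" using ff_perm[OF hF] by (simp add: sym_group_inv_equality sym_group_carrier)
    finally show ?case using permutes_inverses(2)[OF ff_perm[OF hF]] S_fix[OF inv] by metis
  next
    case (eng h1 h2)
    have "h1 \<in> carrier F" "h2 \<in> carrier F"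
      using eng.hyps Hdef HF by auto
    then have "ff (h1 \<otimes>\<^bsub>F\<^esub> h2) = ff h1 \<circ> ff h2"
      using group_hom.hom_mult[OF ghom] by (simp add: sym_group_mult)
    then show ?case using eng.IH by simp
  qed
qed

lemma gamma_move: "\<gamma> \<in> \<Gamma> \<Longrightarrow> ff \<gamma> (e H) \<noteq> e H"
proof
  assume g: "\<gamma> \<in> \<Gamma>" and eq: "ff \<gamma> (e H) = e H"
  have gF: "\<gamma> \<in> carrier F" and gH: "\<gamma> \<notin> H" using g Gsub by auto
  have wW: "wd \<gamma> \<in> W" unfolding W_def using g by blast
  have ev: "word_eval F (wd \<gamma>) = \<gamma>" using wd_props[OF gF] by simp
  have "ff \<gamma> (e H) = e (act \<gamma> H)" using path_W[OF wW, of 0] ev by simp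
  moreover have "act \<gamma> H \<in> V" using suffix_V[OF wW, of 0] ev by simp
  ultimately have "act \<gamma> H = H" using eq e_inj H_V by metis
  then have "inv\<^bsub>F\<^esub> \<gamma> \<in> H" unfolding act_def
    using group.coset_join1[OF grp _ _ Hsub] group.inv_closed[OF grp gF] by blast
  then have "inv\<^bsub>F\<^esub> (inv\<^bsub>F\<^esub> \<gamma>) \<in> H" using subgroup.m_inv_closed[OF Hsub] by blast
  then show False using gH group.inv_inv[OF grp gF] by simp
qed

lemma main: "\<exists>(k::nat) f. f \<in> hom F (sym_group k) \<and> f ` carrier F = carrier (sym_group k) \<and>
           (\<forall>\<gamma>\<in>\<Gamma>. f \<gamma> \<notin> f ` H)"
proof (intro exI conjI ballI)
  show "ff \<in> hom F (sym_group kk)" by (rule ff_hom)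
  show "ff ` carrier F = carrier (sym_group kk)" using GG_full by (simp add: GG_def)
  fix \<gamma> assume g: "\<gamma> \<in> \<Gamma>"
  show "ff \<gamma> \<notin> ff ` H"
  proof
    assume "ff \<gamma> \<in> ff ` H"
    then obtain h where "h \<in> H" "ff \<gamma> = ff h" by blast
    then show False using H_fix gamma_move[OF g] by metis
  qed
qed

end

theorem theoremB:
  fixes F :: "('a, 'b) monoid_scheme" and H :: "'a set" and \<Gamma> :: "'a set"
  assumes "free_group_rank_gt_one F"
    and "fin_gen_subgroup H F"
    and "infinite (rcosets\<^bsub>F\<^esub> H)"
    and "finite \<Gamma>" and "\<Gamma> \<subseteq> carrier F - H"
  shows "\<exists>(k::nat) f. f \<in> hom F (sym_group k) \<and> f ` carrier F = carrier (sym_group k) \<and>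
           (\<forall>\<gamma>\<in>\<Gamma>. f \<gamma> \<notin> f ` H)"
proof -
  obtain B where grp: "group F" and fb: "free_basis F B" and two: "\<exists>a b. a \<in> B \<and> b \<in> B \<and> a \<noteq> b"
    using assms(1) unfolding free_group_rank_gt_one_def by blast
  obtain S where Hsub: "subgroup H F" and S: "finite S" "S \<subseteq> carrier F" "H = generate F S"
    using assms(2) unfolding fin_gen_subgroup_def by blast
  have "schreier F B S H \<Gamma>"
    unfolding schreier_def using grp fb two Hsub S assms(3-5) by blast
  then interpret schreier F B S H \<Gamma> .
  show ?thesis by (rule main)
qed

end
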